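(* Let the premiums $\{X_n, n\geq 1\}$ and the claims $\{Y_n, n\geq 1\}$ be sequences of nonnegative, identically distributed, independent random variables with finite expectations, and let the rates of interest $\{I_n, n\geq 1\}$ be a sequence of i.i.d. nonnegative random variables with finite expectations. Suppose that the sequences $\{X_n\}$, $\{Y_n\}$, $\{I_n\}$ are mutually independent. For $u\geq 0$ define $U_0=u$, $U_n=(U_{n-1}+X_n)(1+I_n)-Y_n$ for $n\geq 1$, and $\Psi(u)=\mathbb{P}\big(\bigcup_{n=1}^\infty\{U_n<0\}\big)$. If there exists a positive real number $R$ satisfying $$\mathbb{E}\Big(e^{R\left(Y_1(1+I_1)^{-1}-X_1\right)}\Big)\leq 1,$$ then $\Psi(u)\leq e^{-Ru}$ for all $u>0$. *)

theory Defs
  imports "HOL-Probability.Probability"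
begin

text \<open>Surplus process of the discrete-time risk model with interest:
  U_0 = u, U_n = (U_{n-1} + X_n)(1 + I_n) - Y_n for n >= 1.
  The sequences are indexed from 1; the value at index 0 is never used.\<close>
fun surplus :: "real \<Rightarrow> (nat \<Rightarrow> 'a \<Rightarrow> real) \<Rightarrow> (nat \<Rightarrow> 'a \<Rightarrow> real)
    \<Rightarrow> (nat \<Rightarrow> 'a \<Rightarrow> real) \<Rightarrow> nat \<Rightarrow> 'a \<Rightarrow> real" where
  "surplus u X Y I 0 \<omega> = u"
| "surplus u X Y I (Suc n) \<omega> =
     (surplus u X Y I n \<omega> + X (Suc n) \<omega>) * (1 + I (Suc n) \<omega>) - Y (Suc n) \<omega>"

definition ruin_prob :: "'a measure \<Rightarrow> real \<Rightarrow> (nat \<Rightarrow> 'a \<Rightarrow> real)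
    \<Rightarrow> (nat \<Rightarrow> 'a \<Rightarrow> real) \<Rightarrow> (nat \<Rightarrow> 'a \<Rightarrow> real) \<Rightarrow> real" where
  "ruin_prob M u X Y I =
     measure M (\<Union>n\<in>{1..}. {\<omega> \<in> space M. surplus u X Y I n \<omega> < 0})"

definition joint_family :: "(nat \<Rightarrow> 'a \<Rightarrow> real) \<Rightarrow> (nat \<Rightarrow> 'a \<Rightarrow> real)
    \<Rightarrow> (nat \<Rightarrow> 'a \<Rightarrow> real) \<Rightarrow> nat + nat + nat \<Rightarrow> 'a \<Rightarrow> real" where
  "joint_family X Y I = case_sum X (case_sum Y I)"

end

theory Submission imports Defs
begin


lemma (in prob_space) indep_var_restrict_comp:
  assumes "indep_vars (\<lambda>_. borel) F J" "A \<inter> B = {}" "A \<subseteq> J" "B \<subseteq> J"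
    "f \<in> PiM A (\<lambda>_. borel) \<rightarrow>\<^sub>M N1" "g \<in> PiM B (\<lambda>_. borel) \<rightarrow>\<^sub>M N2"
  shows "indep_var N1 (\<lambda>\<omega>. f (restrict (\<lambda>i. F i \<omega>) A)) N2 (\<lambda>\<omega>. g (restrict (\<lambda>i. F i \<omega>) B))"
  using indep_var_compose[OF indep_var_restrict[OF assms(1-4)] assms(5,6)] by (simp add: comp_def)

lemma (in prob_space) indep_var_nn_integral2:
  fixes A B :: "'a \<Rightarrow> ennreal"
  assumes "indep_var borel A borel B"
  shows "(\<integral>\<^sup>+\<omega>. A \<omega> * B \<omega> \<partial>M) = (\<integral>\<^sup>+\<omega>. A \<omega> \<partial>M) * (\<integral>\<^sup>+\<omega>. B \<omega> \<partial>M)"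
proof -
  have eq: "case_bool borel borel = (\<lambda>_::bool. (borel :: ennreal measure))"
    by (auto simp: fun_eq_iff split: bool.split)
  have "indep_vars (\<lambda>_. borel) (case_bool A B) UNIV"
    using assms unfolding indep_var_def eq .
  from indep_vars_nn_integral[OF _ this] show ?thesis
    by (simp add: UNIV_bool mult.commute)
qed


definition sp :: "real \<Rightarrow> nat \<Rightarrow> (nat + nat + nat \<Rightarrow> real) \<Rightarrow> real" where
  "sp u k h = surplus u (\<lambda>k h. h (Inl k)) (\<lambda>k h. h (Inr (Inl k))) (\<lambda>k h. h (Inr (Inr k))) k h"

lemma sp_0[simp]: "sp u 0 h = u" by (simp add: sp_def)
lemma sp_Suc[simp]: "sp u (Suc k) h = (sp u k h + h (Inl (Suc k))) * (1 + h (Inr (Inr (Suc k)))) - h (Inr (Inl (Suc k)))"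
  by (simp add: sp_def)

fun rn :: "real \<Rightarrow> nat \<Rightarrow> (nat + nat + nat \<Rightarrow> real) \<Rightarrow> bool" where
  "rn u 0 h = False"
| "rn u (Suc k) h = (rn u k h \<or> sp u (Suc k) h < 0)"

definition idxS :: "nat \<Rightarrow> (nat + nat + nat) set" where
  "idxS n = Inl ` {1..n} \<union> Inr ` Inl ` {1..n} \<union> Inr ` Inr ` {1..n}"

definition idxT :: "nat \<Rightarrow> (nat + nat + nat) set" where
  "idxT m = {Inl m, Inr (Inl m), Inr (Inr m)}"

lemma idxS_mono: "k \<le> n \<Longrightarrow> idxS k \<subseteq> idxS n"
  by (auto simp: idxS_def)

lemma sp_restrict:
  "idxS k \<subseteq> A \<Longrightarrow> surplus u X Y I k \<omega> = sp u k (restrict (\<lambda>i. joint_family X Y I i \<omega>) A)"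
proof (induction k)
  case 0 then show ?case by simp
next
  case (Suc k)
  have "idxS k \<subseteq> A" using Suc.prems idxS_mono[of k "Suc k"] by auto
  moreover have "Inl (Suc k) \<in> A" "Inr (Inl (Suc k)) \<in> A" "Inr (Inr (Suc k)) \<in> A"
    using Suc.prems by (auto simp: idxS_def)
  ultimately show ?case using Suc.IH by (simp add: joint_family_def)
qed

lemma rn_restrict:
  "idxS k \<subseteq> A \<Longrightarrow> rn u k (restrict (\<lambda>i. joint_family X Y I i \<omega>) A) \<longleftrightarrow> (\<exists>j\<in>{1..k}. surplus u X Y I j \<omega> < 0)"
proof (induction k)
  case 0 then show ?case by simp
next
  case (Suc k)
  have "idxS k \<subseteq> A" using Suc.prems idxS_mono[of k "Suc k"] by auto
  then have "rn u (Suc k) (restrict (\<lambda>i. joint_family X Y I i \<omega>) A) \<longleftrightarrow>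
     (\<exists>j\<in>{1..k}. surplus u X Y I j \<omega> < 0) \<or> surplus u X Y I (Suc k) \<omega> < 0"
    by (simp only: rn.simps Suc.IH[OF \<open>idxS k \<subseteq> A\<close>] sp_restrict[OF Suc.prems, symmetric])
  also have "\<dots> \<longleftrightarrow> (\<exists>j\<in>{1..Suc k}. surplus u X Y I j \<omega> < 0)"
    using atLeastAtMostSuc_conv[of 1 k] by (auto simp del: surplus.simps)
  finally show ?case .
qed

lemma sp_meas: "idxS k \<subseteq> A \<Longrightarrow> sp u k \<in> borel_measurable (PiM A (\<lambda>_. borel))"
proof (induction k)
  case 0 then show ?case by simp
next
  case (Suc k)
  have "idxS k \<subseteq> A" using Suc.prems idxS_mono[of k "Suc k"] by auto
  moreover have "Inl (Suc k) \<in> A" "Inr (Inl (Suc k)) \<in> A" "Inr (Inr (Suc k)) \<in> A"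
    using Suc.prems by (auto simp: idxS_def)
  ultimately show ?case using Suc.IH
    by (simp only: sp_Suc) (intro borel_measurable_diff borel_measurable_times borel_measurable_add
        measurable_component_singleton borel_measurable_const; simp)
qed

lemma rn_meas: "idxS k \<subseteq> A \<Longrightarrow> Measurable.pred (PiM A (\<lambda>_. borel)) (rn u k)"
proof (induction k)
  case 0 then show ?case by simp
next
  case (Suc k)
  have "idxS k \<subseteq> A" using Suc.prems idxS_mono[of k "Suc k"] by auto
  note [measurable] = Suc.IH[OF this] sp_meas[OF Suc.prems]
  show ?case by (simp del: sp_Suc)
qed


lemma sp_rw: "sp u k (restrict (\<lambda>i. joint_family X Y I i \<omega>) (idxS k)) = surplus u X Y I k \<omega>"
  using sp_restrict[of k "idxS k" u X Y I \<omega>] by simp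

lemma rn_rw: "rn u k (restrict (\<lambda>i. joint_family X Y I i \<omega>) (idxS k)) \<longleftrightarrow> (\<exists>j\<in>{1..k}. surplus u X Y I j \<omega> < 0)"
  using rn_restrict[of k "idxS k" u X Y I \<omega>] by simp

lemma (in prob_space) nn_integral_indep_pair:
  assumes "indep_var borel A borel B" and f: "f \<in> borel_measurable (borel \<Otimes>\<^sub>M borel)"
  shows "(\<integral>\<^sup>+\<omega>. f (A \<omega>, B \<omega>) \<partial>M) = (\<integral>\<^sup>+z. f z \<partial>(distr M borel A \<Otimes>\<^sub>M distr M borel B))"
proof -
  from assms(1)[unfolded indep_var_distribution_eq] have
    rv: "A \<in> borel_measurable M" "B \<in> borel_measurable M" and
    eq: "distr M borel A \<Otimes>\<^sub>M distr M borel B = distr M (borel \<Otimes>\<^sub>M borel) (\<lambda>x. (A x, B x))"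
    by auto
  show ?thesis unfolding eq
    by (subst nn_integral_distr) (auto intro: measurable_Pair rv f)
qed

lemma step_ineq:
  fixes U x y i R :: real
  assumes "i \<ge> 0" "R > 0" "U \<ge> 0"
  shows "(if (U + x) * (1 + i) - y < 0 then 1 else ennreal (exp (- R * ((U + x) * (1 + i) - y))))
     \<le> ennreal (exp (- R * U)) * ennreal (exp (R * (y / (1 + i) - x)))"
proof -
  have rhs: "ennreal (exp (- R * U)) * ennreal (exp (R * (y / (1 + i) - x))) = ennreal (exp (R * (y / (1 + i) - x - U)))"
    by (simp add: ennreal_mult[symmetric] exp_add[symmetric] algebra_simps)
  have pos: "1 + i > 0" using assms by simp
  have key: "(U + x) * (1 + i) - y = (1 + i) * (U - (y / (1 + i) - x))"
    using pos by (simp add: field_simps)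
  show ?thesis
  proof (cases "(U + x) * (1 + i) - y < 0")
    case True
    then have "U - (y / (1 + i) - x) < 0" using key pos by (simp add: mult_less_0_iff)
    then have "0 \<le> R * (y / (1 + i) - x - U)" using assms by simp
    then show ?thesis using True rhs by simp
  next
    case False
    then have d: "U - (y / (1 + i) - x) \<ge> 0" using key pos
      by (metis linorder_not_le mult_pos_neg)
    then have "(1 + i) * (U - (y / (1 + i) - x)) \<ge> U - (y / (1 + i) - x)"
      using assms by (simp add: mult_le_cancel_right1 mult_right_mono)
    then have "R * (U - (y / (1 + i) - x)) \<le> R * ((1 + i) * (U - (y / (1 + i) - x)))"
      using assms by (simp add: mult_left_mono)
    moreover have "R * (y / (1 + i) - x - U) = - (R * (U - (y / (1 + i) - x)))" by (simp add: algebra_simps)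
    ultimately have "- R * ((U + x) * (1 + i) - y) \<le> R * (y / (1 + i) - x - U)"
      unfolding key by linarith
    then show ?thesis using False rhs by (simp add: ennreal_leI)
  qed
qed



theorem corollary3p2:
  fixes M :: "'a measure" and X Y I :: "nat \<Rightarrow> 'a \<Rightarrow> real" and R u :: real
  assumes "prob_space M"
    and meas: "\<And>n. n \<ge> 1 \<Longrightarrow> X n \<in> borel_measurable M \<and> Y n \<in> borel_measurable M
                              \<and> I n \<in> borel_measurable M"
    and nonneg: "\<And>n. n \<ge> 1 \<Longrightarrow>
        (AE \<omega> in M. X n \<omega> \<ge> 0) \<and> (AE \<omega> in M. Y n \<omega> \<ge> 0) \<and> (AE \<omega> in M. I n \<omega> \<ge> 0)"
    and ident: "\<And>n. n \<ge> 1 \<Longrightarrow>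
        distr M borel (X n) = distr M borel (X 1) \<and> distr M borel (Y n) = distr M borel (Y 1)
        \<and> distr M borel (I n) = distr M borel (I 1)"
    and finexp: "\<And>n. n \<ge> 1 \<Longrightarrow> integrable M (X n) \<and> integrable M (Y n) \<and> integrable M (I n)"
    and indep: "prob_space.indep_vars M (\<lambda>_. borel) (joint_family X Y I)
                  (Inl ` {1..} \<union> Inr ` Inl ` {1..} \<union> Inr ` Inr ` {1..})"
    and R_pos: "R > 0"
    and lundberg: "(\<integral>\<^sup>+ \<omega>. ennreal (exp (R * (Y 1 \<omega> / (1 + I 1 \<omega>) - X 1 \<omega>))) \<partial>M) \<le> 1"
    and u_pos: "u > 0"
  shows "ruin_prob M u X Y I \<le> exp (- R * u)"
  proof -
  interpret prob_space M by fact
  define F where "F = joint_family X Y I"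
  define J where "J = Inl ` {1::nat..} \<union> Inr ` Inl ` {1::nat..} \<union> Inr ` Inr ` {1::nat..}"
  have ind: "indep_vars (\<lambda>_. borel) F J" using indep unfolding F_def J_def .
  define rw where "rw A \<omega> = restrict (\<lambda>i. F i \<omega>) A" for A \<omega>
  have Fmeas: "F i \<in> borel_measurable M" if "i \<in> J" for i
    using that meas by (auto simp: J_def F_def joint_family_def)
  have rw_meas: "rw A \<in> M \<rightarrow>\<^sub>M PiM A (\<lambda>_. borel)" if "A \<subseteq> J" for A
    unfolding rw_def using that by (intro measurable_restrict Fmeas) auto
  have S_J: "idxS n \<subseteq> J" for n by (auto simp: idxS_def J_def)
  have T_J: "idxT m \<subseteq> J" if "m \<ge> 1" for m using that by (auto simp: idxT_def J_def)
  have disj: "idxS n \<inter> idxT (Suc n) = {}" for n by (auto simp: idxS_def idxT_def)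

  define Phi where "Phi n h = (if rn u n h then 1 else ennreal (exp (- R * sp u n h)))" for n h
  define p where "p n h = (if rn u n h then 1 else 0::ennreal)" for n h
  define q where "q n h = (if rn u n h then 0 else ennreal (exp (- R * sp u n h)))" for n h
  define e where "e (m::nat) (h::nat + nat + nat \<Rightarrow> real) = ennreal (exp (R * (h (Inr (Inl m)) / (1 + h (Inr (Inr m))) - h (Inl m))))" for m h

  have Phi_meas: "Phi n \<in> borel_measurable (PiM (idxS n) (\<lambda>_. borel))" for n
  proof -
    note [measurable] = rn_meas[where k=n and u=u, OF order_refl] sp_meas[where k=n and u=u, OF order_refl]
    show ?thesis unfolding Phi_def by measurable
  qed
  have p_meas: "p n \<in> borel_measurable (PiM (idxS n) (\<lambda>_. borel))" for n
  proof -
    note [measurable] = rn_meas[where k=n and u=u, OF order_refl] sp_meas[where k=n and u=u, OF order_refl]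
    show ?thesis unfolding p_def by measurable
  qed
  have q_meas: "q n \<in> borel_measurable (PiM (idxS n) (\<lambda>_. borel))" for n
  proof -
    note [measurable] = rn_meas[where k=n and u=u, OF order_refl] sp_meas[where k=n and u=u, OF order_refl]
    show ?thesis unfolding q_def by measurable
  qed
  have e_meas: "e m \<in> borel_measurable (PiM (idxT m) (\<lambda>_. borel))" for m
  proof -
    have [measurable]: "(\<lambda>h. h j) \<in> borel_measurable (PiM (idxT m) (\<lambda>_. borel))" if "j \<in> idxT m" for j
      using that by (rule measurable_component_singleton)
    have [simp]: "Inl m \<in> idxT m" "Inr (Inl m) \<in> idxT m" "Inr (Inr m) \<in> idxT m" by (auto simp: idxT_def)
    show ?thesis unfolding e_def by measurable
  qed
  have e_rw: "e m (rw (idxT m) \<omega>) = ennreal (exp (R * (Y m \<omega> / (1 + I m \<omega>) - X m \<omega>)))" for m \<omega>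
    by (simp add: e_def rw_def idxT_def F_def joint_family_def)

  define A1 where "A1 m = (\<integral>\<^sup>+\<omega>. ennreal (exp (- R * X m \<omega>)) \<partial>M)" for m
  define B1 where "B1 m = (\<integral>\<^sup>+\<omega>. ennreal (exp (R * (Y m \<omega> / (1 + I m \<omega>)))) \<partial>M)" for m
  have G_eq: "(\<integral>\<^sup>+\<omega>. ennreal (exp (R * (Y m \<omega> / (1 + I m \<omega>) - X m \<omega>))) \<partial>M) = A1 m * B1 m"
    if "m \<ge> 1" for m
  proof -
    define f where "f h = ennreal (exp (- R * h (Inl m)))" for h :: "nat + nat + nat \<Rightarrow> real"
    define g where "g h = ennreal (exp (R * (h (Inr (Inl m)) / (1 + h (Inr (Inr m))))))" for h :: "nat + nat + nat \<Rightarrow> real"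
    have fm: "f \<in> borel_measurable (PiM {Inl m} (\<lambda>_. borel))"
    proof -
      have [measurable]: "(\<lambda>h. h (Inl m)) \<in> borel_measurable (PiM {Inl m} (\<lambda>_. borel))"
        by (rule measurable_component_singleton) simp
      show ?thesis unfolding f_def by measurable
    qed
    have gm: "g \<in> borel_measurable (PiM {Inr (Inl m), Inr (Inr m)} (\<lambda>_. borel))"
    proof -
      have [measurable]: "(\<lambda>h. h j) \<in> borel_measurable (PiM {Inr (Inl m), Inr (Inr m)} (\<lambda>_. borel))"
        if "j \<in> {Inr (Inl m), Inr (Inr m)}" for j
        using that by (rule measurable_component_singleton)
      show ?thesis unfolding g_def by measurable
    qed
    have "indep_var borel (\<lambda>\<omega>. f (restrict (\<lambda>i. F i \<omega>) {Inl m})) borel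
       (\<lambda>\<omega>. g (restrict (\<lambda>i. F i \<omega>) {Inr (Inl m), Inr (Inr m)}))"
      by (rule indep_var_restrict_comp[OF ind _ _ _ fm gm]) (use that in \<open>auto simp: J_def\<close>)
    also have "(\<lambda>\<omega>. f (restrict (\<lambda>i. F i \<omega>) {Inl m})) = (\<lambda>\<omega>. ennreal (exp (- R * X m \<omega>)))"
      by (simp add: f_def F_def joint_family_def)
    also have "(\<lambda>\<omega>. g (restrict (\<lambda>i. F i \<omega>) {Inr (Inl m), Inr (Inr m)})) =
        (\<lambda>\<omega>. ennreal (exp (R * (Y m \<omega> / (1 + I m \<omega>)))))"
      by (simp add: g_def F_def joint_family_def)
    finally have iv: "indep_var borel (\<lambda>\<omega>. ennreal (exp (- R * X m \<omega>))) borel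
        (\<lambda>\<omega>. ennreal (exp (R * (Y m \<omega> / (1 + I m \<omega>)))))" .
    have "(\<integral>\<^sup>+\<omega>. ennreal (exp (R * (Y m \<omega> / (1 + I m \<omega>) - X m \<omega>))) \<partial>M) =
       (\<integral>\<^sup>+\<omega>. ennreal (exp (- R * X m \<omega>)) * ennreal (exp (R * (Y m \<omega> / (1 + I m \<omega>)))) \<partial>M)"
      by (intro nn_integral_cong) (simp add: ennreal_mult[symmetric] exp_add[symmetric] algebra_simps)
    also have "\<dots> = A1 m * B1 m" unfolding A1_def B1_def by (rule indep_var_nn_integral2[OF iv])
    finally show ?thesis .
  qed
  have A1_eq: "A1 m = A1 1" if "m \<ge> 1" for m
  proof -
    have d: "A1 k = (\<integral>\<^sup>+x. ennreal (exp (- R * x)) \<partial>distr M borel (X k))" if "k \<ge> 1" for k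
      unfolding A1_def
      by (subst nn_integral_distr) (use meas that in auto)
    show ?thesis using d[OF that] d[of 1] ident[OF that] by simp
  qed
  have B1_eq: "B1 m = B1 1" if "m \<ge> 1" for m
  proof -
    have B1_distr: "B1 m = (\<integral>\<^sup>+z. ennreal (exp (R * (fst z / (1 + snd z)))) \<partial>(distr M borel (Y m) \<Otimes>\<^sub>M distr M borel (I m)))"
      if "m \<ge> 1" for m
    proof -
      define f where "f h = h (Inr (Inl m))" for h :: "nat + nat + nat \<Rightarrow> real"
      define g where "g h = h (Inr (Inr m))" for h :: "nat + nat + nat \<Rightarrow> real"
      have fm: "f \<in> borel_measurable (PiM {Inr (Inl m)} (\<lambda>_. borel))"
        unfolding f_def by (rule measurable_component_singleton) simp
      have gm: "g \<in> borel_measurable (PiM {Inr (Inr m)} (\<lambda>_. borel))"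
        unfolding g_def by (rule measurable_component_singleton) simp
      have "indep_var borel (\<lambda>\<omega>. f (restrict (\<lambda>i. F i \<omega>) {Inr (Inl m)})) borel
         (\<lambda>\<omega>. g (restrict (\<lambda>i. F i \<omega>) {Inr (Inr m)}))"
        by (rule indep_var_restrict_comp[OF ind _ _ _ fm gm]) (use that in \<open>auto simp: J_def\<close>)
      also have "(\<lambda>\<omega>. f (restrict (\<lambda>i. F i \<omega>) {Inr (Inl m)})) = Y m"
        by (simp add: f_def F_def joint_family_def fun_eq_iff)
      also have "(\<lambda>\<omega>. g (restrict (\<lambda>i. F i \<omega>) {Inr (Inr m)})) = I m"
        by (simp add: g_def F_def joint_family_def fun_eq_iff)
      finally have iv: "indep_var borel (Y m) borel (I m)" .
      have "B1 m = (\<integral>\<^sup>+\<omega>. (\<lambda>z. ennreal (exp (R * (fst z / (1 + snd z))))) (Y m \<omega>, I m \<omega>) \<partial>M)"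
        unfolding B1_def by simp
      also have "\<dots> = (\<integral>\<^sup>+z. ennreal (exp (R * (fst z / (1 + snd z)))) \<partial>(distr M borel (Y m) \<Otimes>\<^sub>M distr M borel (I m)))"
        by (rule nn_integral_indep_pair[OF iv]) measurable
      finally show ?thesis .
    qed
    show ?thesis using B1_distr[OF that] B1_distr[of 1] ident[OF that] by simp
  qed
  have eint: "(\<integral>\<^sup>+\<omega>. e m (rw (idxT m) \<omega>) \<partial>M) \<le> 1" if "m \<ge> 1" for m
  proof -
    have "(\<integral>\<^sup>+\<omega>. e m (rw (idxT m) \<omega>) \<partial>M) = A1 m * B1 m"
      unfolding e_rw by (rule G_eq[OF that])
    also have "\<dots> = A1 1 * B1 1" using A1_eq[OF that] B1_eq[OF that] by simp
    also have "\<dots> = (\<integral>\<^sup>+\<omega>. ennreal (exp (R * (Y 1 \<omega> / (1 + I 1 \<omega>) - X 1 \<omega>))) \<partial>M)"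
      by (rule G_eq[symmetric]) simp
    also have "\<dots> \<le> 1" using lundberg by simp
    finally show ?thesis .
  qed

  have main: "(\<integral>\<^sup>+\<omega>. Phi n (rw (idxS n) \<omega>) \<partial>M) \<le> ennreal (exp (- R * u))" for n
  proof (induction n)
    case 0
    have "(\<integral>\<^sup>+\<omega>. Phi 0 (rw (idxS 0) \<omega>) \<partial>M) = (\<integral>\<^sup>+\<omega>. ennreal (exp (- R * u)) \<partial>M)"
      by (simp add: Phi_def)
    also have "\<dots> = ennreal (exp (- R * u))" by (simp add: emeasure_space_1)
    finally show ?case by simp
  next
    case (Suc n)
    have m_rw: "(\<lambda>\<omega>. f (rw A \<omega>)) \<in> borel_measurable M"
      if "A \<subseteq> J" "f \<in> borel_measurable (PiM A (\<lambda>_. borel))" for A and f :: "_ \<Rightarrow> ennreal"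
      using measurable_comp[OF rw_meas[OF that(1)] that(2)] by (simp add: comp_def)
    have Phi_rw: "Phi k (rw (idxS k) \<omega>) = (if \<exists>j\<in>{1..k}. surplus u X Y I j \<omega> < 0 then 1
        else ennreal (exp (- R * surplus u X Y I k \<omega>)))" for k \<omega>
      unfolding Phi_def rw_def F_def rn_rw sp_rw ..
    have p_rw: "p k (rw (idxS k) \<omega>) = (if \<exists>j\<in>{1..k}. surplus u X Y I j \<omega> < 0 then 1 else 0)" for k \<omega>
      unfolding p_def rw_def F_def rn_rw sp_rw ..
    have q_rw: "q k (rw (idxS k) \<omega>) = (if \<exists>j\<in>{1..k}. surplus u X Y I j \<omega> < 0 then 0
        else ennreal (exp (- R * surplus u X Y I k \<omega>)))" for k \<omega>
      unfolding q_def rw_def F_def rn_rw sp_rw ..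
    have AEI: "AE \<omega> in M. I (Suc n) \<omega> \<ge> 0" using nonneg[of "Suc n"] by simp
    have pw: "AE \<omega> in M. Phi (Suc n) (rw (idxS (Suc n)) \<omega>) \<le>
        p n (rw (idxS n) \<omega>) + q n (rw (idxS n) \<omega>) * e (Suc n) (rw (idxT (Suc n)) \<omega>)"
      using AEI
    proof eventually_elim
      case (elim \<omega>)
      show ?case
      proof (cases "\<exists>j\<in>{1..n}. surplus u X Y I j \<omega> < 0")
        case True
        then have "\<exists>j\<in>{1..Suc n}. surplus u X Y I j \<omega> < 0" by force
        then show ?thesis using True unfolding Phi_rw p_rw q_rw by simp
      next
        case False
        have U0: "surplus u X Y I n \<omega> \<ge> 0"
        proof (cases n)
          case 0 then show ?thesis using u_pos by simp
        next
          case (Suc k) then have "n \<in> {1..n}" by simp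
          then show ?thesis using False by (meson linorder_not_le)
        qed
        have ex: "(\<exists>j\<in>{1..Suc n}. surplus u X Y I j \<omega> < 0) \<longleftrightarrow> surplus u X Y I (Suc n) \<omega> < 0"
          using False atLeastAtMostSuc_conv[of 1 n] by (auto simp del: surplus.simps)
        show ?thesis
          unfolding Phi_rw p_rw q_rw ex e_rw surplus.simps(2) if_not_P[OF False] add_0_left
          by (rule step_ineq[OF elim R_pos U0])
      qed
    qed
    have iv: "indep_var borel (\<lambda>\<omega>. q n (rw (idxS n) \<omega>)) borel (\<lambda>\<omega>. e (Suc n) (rw (idxT (Suc n)) \<omega>))"
      unfolding rw_def
      by (rule indep_var_restrict_comp[OF ind disj S_J T_J q_meas e_meas]) simp
    have "(\<integral>\<^sup>+\<omega>. Phi (Suc n) (rw (idxS (Suc n)) \<omega>) \<partial>M) \<le>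
        (\<integral>\<^sup>+\<omega>. p n (rw (idxS n) \<omega>) + q n (rw (idxS n) \<omega>) * e (Suc n) (rw (idxT (Suc n)) \<omega>) \<partial>M)"
      by (rule nn_integral_mono_AE[OF pw])
    also have "\<dots> = (\<integral>\<^sup>+\<omega>. p n (rw (idxS n) \<omega>) \<partial>M) +
        (\<integral>\<^sup>+\<omega>. q n (rw (idxS n) \<omega>) * e (Suc n) (rw (idxT (Suc n)) \<omega>) \<partial>M)"
    proof (rule nn_integral_add)
      have [measurable]: "(\<lambda>\<omega>. q n (rw (idxS n) \<omega>)) \<in> borel_measurable M" by (rule m_rw[OF S_J q_meas])
      have [measurable]: "(\<lambda>\<omega>. e (Suc n) (rw (idxT (Suc n)) \<omega>)) \<in> borel_measurable M"
        by (rule m_rw[OF T_J e_meas]) simp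
      show "(\<lambda>\<omega>. p n (rw (idxS n) \<omega>)) \<in> borel_measurable M" by (rule m_rw[OF S_J p_meas])
      show "(\<lambda>\<omega>. q n (rw (idxS n) \<omega>) * e (Suc n) (rw (idxT (Suc n)) \<omega>)) \<in> borel_measurable M"
        by measurable
    qed
    also have "(\<integral>\<^sup>+\<omega>. q n (rw (idxS n) \<omega>) * e (Suc n) (rw (idxT (Suc n)) \<omega>) \<partial>M) =
        (\<integral>\<^sup>+\<omega>. q n (rw (idxS n) \<omega>) \<partial>M) * (\<integral>\<^sup>+\<omega>. e (Suc n) (rw (idxT (Suc n)) \<omega>) \<partial>M)"
      by (rule indep_var_nn_integral2[OF iv])
    also have "\<dots> \<le> (\<integral>\<^sup>+\<omega>. q n (rw (idxS n) \<omega>) \<partial>M) * 1"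
      by (intro mult_left_mono eint) simp_all
    also have "(\<integral>\<^sup>+\<omega>. p n (rw (idxS n) \<omega>) \<partial>M) + (\<integral>\<^sup>+\<omega>. q n (rw (idxS n) \<omega>) \<partial>M) * 1 =
        (\<integral>\<^sup>+\<omega>. p n (rw (idxS n) \<omega>) + q n (rw (idxS n) \<omega>) \<partial>M)"
      by (simp, rule nn_integral_add[symmetric]) (intro m_rw S_J p_meas q_meas)+
    also have "\<dots> = (\<integral>\<^sup>+\<omega>. Phi n (rw (idxS n) \<omega>) \<partial>M)"
      by (intro nn_integral_cong) (simp add: p_def q_def Phi_def)
    also note Suc.IH
    finally show ?case by - (simp add: add_left_mono)
  qed
  have Phi_rw: "Phi k (rw (idxS k) \<omega>) = (if \<exists>j\<in>{1..k}. surplus u X Y I j \<omega> < 0 then 1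
      else ennreal (exp (- R * surplus u X Y I k \<omega>)))" for k \<omega>
    unfolding Phi_def rw_def F_def rn_rw sp_rw ..
  define Ruin where "Ruin n = {\<omega> \<in> space M. \<exists>j\<in>{1..n}. surplus u X Y I j \<omega> < 0}" for n
  have Ruin_sets: "Ruin n \<in> sets M" for n
  proof -
    have "Ruin n = {\<omega> \<in> space M. rn u n (rw (idxS n) \<omega>)}"
      by (simp add: Ruin_def rw_def F_def rn_rw)
    moreover have [measurable]: "Measurable.pred M (\<lambda>\<omega>. rn u n (rw (idxS n) \<omega>))"
      using measurable_compose[OF rw_meas[OF S_J] rn_meas[where k=n and u=u, OF order_refl]] .
    ultimately show ?thesis by simp
  qed
  have Ruin_le: "emeasure M (Ruin n) \<le> ennreal (exp (- R * u))" for n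
  proof -
    have "emeasure M (Ruin n) = (\<integral>\<^sup>+\<omega>. indicator (Ruin n) \<omega> \<partial>M)"
      by (rule nn_integral_indicator[symmetric, OF Ruin_sets])
    also have "\<dots> \<le> (\<integral>\<^sup>+\<omega>. Phi n (rw (idxS n) \<omega>) \<partial>M)"
      by (intro nn_integral_mono) (auto simp: Phi_rw Ruin_def indicator_def)
    also note main
    finally show ?thesis .
  qed
  have U: "(\<Union>n\<in>{1..}. {\<omega> \<in> space M. surplus u X Y I n \<omega> < 0}) = (\<Union>n. Ruin n)"
    by (auto simp: Ruin_def simp del: surplus.simps) (metis atLeastAtMost_iff order_refl)
  have inc: "incseq Ruin"
    by (rule incseq_SucI) (auto simp: Ruin_def simp del: surplus.simps)
  have "emeasure M (\<Union>n. Ruin n) = (SUP n. emeasure M (Ruin n))"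
    by (rule SUP_emeasure_incseq[symmetric]) (use Ruin_sets inc in auto)
  also have "\<dots> \<le> ennreal (exp (- R * u))" by (rule SUP_least) (rule Ruin_le)
  finally have "ennreal (measure M (\<Union>n. Ruin n)) \<le> ennreal (exp (- R * u))"
    by (simp add: emeasure_eq_measure)
  then show ?thesis unfolding ruin_prob_def U by simp
qed

end
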